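(* Let $\mathcal{P}=[0,1]^n\cap K$ be a polytope, where $K$ is an affine subspace of $\mathbb{R}^n$. Let $v$ be a vertex of $\mathcal{P}$ and let $F$ be a facet of $\mathcal{P}$ that does not contain $v$. Then there exists a coordinate $i\in[n]$ such that either $v_i>0$ and $x_i=0$ for all $x\in F$, or $v_i<1$ and $x_i=1$ for all $x\in F$. *)

theory Defs
  imports "HOL-Analysis.Analysis"
begin

definition unit_cube :: "(real ^ 'n) set" where
  "unit_cube = {x. \<forall>i. 0 \<le> x $ i \<and> x $ i \<le> 1}"

end

theory Submission
  imports Defs
begin

lemma relint_coord:
  fixes F :: "(real ^ 'n) set"
  assumes cF: "convex F" and sub: "F \<subseteq> unit_cube" and z: "z \<in> rel_interior F"
    and x: "x \<in> F"
  shows "z $ i = 0 \<Longrightarrow> x $ i = 0" and "z $ i = 1 \<Longrightarrow> x $ i = 1"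
proof -
  have xc: "0 \<le> x $ i" "x $ i \<le> 1" using x sub unfolding unit_cube_def by auto
  have "\<exists>m>1. (1 - m) *\<^sub>R x + m *\<^sub>R z \<in> F"
  proof (cases "x = z")
    case True
    have "(1 - (2::real)) *\<^sub>R x + 2 *\<^sub>R z = ((1 - 2) + 2) *\<^sub>R z" using True
      by (simp only: scaleR_left_distrib)
    then show ?thesis using x True by (intro exI[of _ 2]) simp
  next
    case False
    have "x \<in> affine hull F" using x by (simp add: hull_inc)
    from convex_rel_interior_if[OF cF z] this obtain m where "m > 1"
      "\<forall>e. e > 1 \<and> e \<le> m \<longrightarrow> (1 - e) *\<^sub>R x + e *\<^sub>R z \<in> F" by blast
    then show ?thesis by auto
  qed
  then obtain m where m: "m > 1" "(1 - m) *\<^sub>R x + m *\<^sub>R z \<in> F" by blast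
  hence c: "0 \<le> (1 - m) * x $ i + m * z $ i" "(1 - m) * x $ i + m * z $ i \<le> 1"
    using sub unfolding unit_cube_def by auto
  show "z $ i = 0 \<Longrightarrow> x $ i = 0"
  proof -
    assume "z $ i = 0"
    with c have "0 \<le> (1 - m) * x $ i" by simp
    moreover have "(1 - m) * x $ i \<le> 0" using m xc by (simp add: mult_nonpos_nonneg)
    ultimately show "x $ i = 0" using m by simp
  qed
  show "z $ i = 1 \<Longrightarrow> x $ i = 1"
  proof -
    assume "z $ i = 1"
    with c have "(1 - m) * (x $ i - 1) \<le> 0" by (simp add: algebra_simps)
    hence "x $ i - 1 \<ge> 0" using m by (simp add: mult_le_0_iff)
    thus "x $ i = 1" using xc by simp
  qed
qed

theorem lemma13:
  fixes K :: "(real ^ 'n) set" and v :: "real ^ 'n" and F :: "(real ^ 'n) set"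
  assumes "affine K"
    and "v extreme_point_of (unit_cube \<inter> K)"
    and "F facet_of (unit_cube \<inter> K)"
    and "v \<notin> F"
  shows "\<exists>i. (v $ i > 0 \<and> (\<forall>x\<in>F. x $ i = 0)) \<or> (v $ i < 1 \<and> (\<forall>x\<in>F. x $ i = 1))"
proof (rule ccontr)
  assume neg: "\<not> ?thesis"
  have face: "F face_of (unit_cube \<inter> K)" and ne: "F \<noteq> {}"
    using assms(3) unfolding facet_of_def by auto
  have vP: "v \<in> unit_cube \<inter> K" using assms(2) unfolding extreme_point_of_def by auto
  have cF: "convex F" using face face_of_imp_convex by blast
  have FP: "F \<subseteq> unit_cube \<inter> K" using face face_of_imp_subset by blast
  hence sub: "F \<subseteq> unit_cube" by blast
  obtain z where z: "z \<in> rel_interior F" using rel_interior_eq_empty[OF cF] ne by blast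
  have zF: "z \<in> F" using z rel_interior_subset by blast
  have zP: "z \<in> unit_cube \<inter> K" using zF FP by blast
  have vc: "\<And>i. 0 \<le> v $ i \<and> v $ i \<le> 1" using vP unfolding unit_cube_def by auto
  have zc: "\<And>i. 0 \<le> z $ i \<and> z $ i \<le> 1" using zP unfolding unit_cube_def by auto
  have z0: "v $ i = 0" if "z $ i = 0" for i
  proof -
    have "\<forall>x\<in>F. x $ i = 0" using relint_coord(1)[OF cF sub z] that by blast
    moreover have "\<not> (v $ i > 0 \<and> (\<forall>x\<in>F. x $ i = 0))" using neg by blast
    ultimately show ?thesis using vc[of i] by linarith
  qed
  have z1: "v $ i = 1" if "z $ i = 1" for i
  proof -
    have "\<forall>x\<in>F. x $ i = 1" using relint_coord(2)[OF cF sub z] that by blast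
    moreover have "\<not> (v $ i < 1 \<and> (\<forall>x\<in>F. x $ i = 1))" using neg by blast
    ultimately show ?thesis using vc[of i] by linarith
  qed
  define S where "S = (\<lambda>i. min (z $ i) (1 - z $ i)) ` {i. 0 < z $ i \<and> z $ i < 1} \<union> {1}"
  define d where "d = Min S"
  have finS: "finite S" unfolding S_def by auto
  have Spos: "\<forall>s\<in>S. s > 0" unfolding S_def by auto
  have Sne: "S \<noteq> {}" unfolding S_def by blast
  have dpos: "d > 0" unfolding d_def using Min_gr_iff[OF finS Sne] Spos by blast
  have dle: "d \<le> min (z $ i) (1 - z $ i)" if "0 < z $ i" "z $ i < 1" for i
    unfolding d_def using that by (intro Min_le[OF finS]) (simp add: S_def)
  define w where "w = (1 + d) *\<^sub>R z - d *\<^sub>R v"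
  have wK: "w \<in> K"
  proof -
    have "(1 + d) *\<^sub>R z + (- d) *\<^sub>R v \<in> K"
    proof -
      have "\<forall>x\<in>K. \<forall>y\<in>K. \<forall>u w. u + w = 1 \<longrightarrow> u *\<^sub>R x + w *\<^sub>R y \<in> K"
        using assms(1) unfolding affine_def by blast
      moreover have "z \<in> K" "v \<in> K" using zP vP by auto
      moreover have "(1 + d) + (- d) = (1::real)" by simp
      ultimately show ?thesis by blast
    qed
    thus ?thesis unfolding w_def by simp
  qed
  have wc: "w \<in> unit_cube"
    unfolding unit_cube_def
  proof (intro CollectI allI)
    fix i
    have wi: "w $ i = z $ i + d * (z $ i - v $ i)" unfolding w_def by (simp add: algebra_simps)
    show "0 \<le> w $ i \<and> w $ i \<le> 1"
    proof (cases "z $ i = 0")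
      case True then show ?thesis using wi z0 by simp
    next
      case f0: False
      show ?thesis
      proof (cases "z $ i = 1")
        case True then show ?thesis using wi z1 by simp
      next
        case False
        hence "0 < z $ i" "z $ i < 1" using f0 zc[of i] by auto
        hence "d \<le> z $ i" "d \<le> 1 - z $ i" using dle by auto
        moreover have "\<bar>z $ i - v $ i\<bar> \<le> 1" using zc[of i] vc[of i] by auto
        ultimately have "\<bar>d * (z $ i - v $ i)\<bar> \<le> d" using dpos
          by (simp add: abs_mult mult_left_le)
        then show ?thesis using wi \<open>d \<le> z $ i\<close> \<open>d \<le> 1 - z $ i\<close> by (auto simp: abs_le_iff)
      qed
    qed
  qed
  have vz: "v \<noteq> z" using assms(4) zF by blast
  have vw: "v \<noteq> w"
  proof
    assume "v = w"
    hence "(1 + d) *\<^sub>R (z - v) = 0" unfolding w_def by (simp add: algebra_simps)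
    thus False using vz dpos by simp
  qed
  define t where "t = 1 / (1 + d)"
  have t: "0 < t" "t < 1" unfolding t_def using dpos by auto
  have "z = (1 - t) *\<^sub>R v + t *\<^sub>R w"
  proof -
    have nz: "1 + d \<noteq> 0" using dpos by linarith
    have h1: "t * (1 + d) = 1" unfolding t_def using nz by simp
    have "t * (1 + d) = t + t * d" by (simp only: distrib_left mult_1_right)
    hence h2: "t * d = 1 - t" using h1 by linarith
    have "t *\<^sub>R w = (t * (1 + d)) *\<^sub>R z - (t * d) *\<^sub>R v"
      by (simp only: w_def scaleR_right_diff_distrib scaleR_scaleR)
    also have "\<dots> = z - (1 - t) *\<^sub>R v" by (simp only: h1 h2 scaleR_one)
    finally have tw: "t *\<^sub>R w = z - (1 - t) *\<^sub>R v" .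
    show ?thesis unfolding tw by (metis add.commute diff_add_cancel)
  qed
  hence zs: "z \<in> open_segment v w" unfolding in_segment(2) using vw t by (intro conjI exI[of _ t]) simp_all
  have fp: "\<forall>a\<in>unit_cube \<inter> K. \<forall>b\<in>unit_cube \<inter> K. \<forall>x\<in>F. x \<in> open_segment a b \<longrightarrow> a \<in> F \<and> b \<in> F"
    using face unfolding face_of_def by blast
  have wP: "w \<in> unit_cube \<inter> K" using wK wc by blast
  have "v \<in> F" using fp[rule_format, OF vP wP zF zs] by (rule conjunct1)
  thus False using assms(4) by blast
qed

end
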